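(* Let $n\ge1$, $0\le k\le n$, and let $H$ be an operator on $(\mathbb{C}^2)^{\otimes n}$ that can be written as a sum of $k$-local terms. Then $$\mathrm{Tr}(HB_k)=2^{k-n}\,\mathrm{Tr}(HC_k),$$ and $\mathrm{Tr}(HB_r)=0$ for all $r$ with $k<r\le n$.
   Context: Qubits $1,\dots,n$, $Z_j$ the Pauli $Z$ on qubit $j$. An operator is $k$-local if it acts non-trivially on at most $k$ qubits. For $m=0,\dots,n$, $\Pi_m$ is the projector onto the span of computational basis states with exactly $m$ qubits in state $|1\rangle$. Define $C_0=I$ and for $l\ge1$, $C_l=\sum_{i_1<\cdots<i_l}Z_{i_1}\cdots Z_{i_l}$. For $0\le k\le n$ define $B_k=\sum_{m=0}^k(-1)^m\binom{n-m}{k-m}\Pi_m$. *)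

theory Defs
  imports Complex_Main
begin

text \<open>Computational basis states of qubits 0..n-1 are
  identified with the set S \<subseteq> {..<n} of qubits in state |1>. An operator is its
  matrix M S T = <S|M|T>; only entries with S, T \<subseteq> {..<n} are relevant.\<close>

type_synonym qop = "nat set \<Rightarrow> nat set \<Rightarrow> complex"

definition basis :: "nat \<Rightarrow> nat set set" where
  "basis n = Pow {..<n}"

definition mmult :: "nat \<Rightarrow> qop \<Rightarrow> qop \<Rightarrow> qop" where
  "mmult n A B = (\<lambda>S T. \<Sum>U\<in>basis n. A S U * B U T)"

definition qtrace :: "nat \<Rightarrow> qop \<Rightarrow> complex" where
  "qtrace n A = (\<Sum>S\<in>basis n. A S S)"

definition idop :: qop where
  "idop = (\<lambda>S T. if S = T then 1 else 0)"

definition pauliZ :: "nat \<Rightarrow> qop" where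
  "pauliZ j = (\<lambda>S T. if S = T then (if j \<in> S then -1 else 1) else 0)"

definition Zprod :: "nat set \<Rightarrow> qop" where
  "Zprod I = (\<lambda>S T. if S = T then (\<Prod>j\<in>I. if j \<in> S then -1 else 1) else 0)"

definition Cop :: "nat \<Rightarrow> nat \<Rightarrow> qop" where
  "Cop n l = (if l = 0 then idop
     else (\<lambda>S T. \<Sum>I\<in>{I. I \<subseteq> {..<n} \<and> card I = l}. Zprod I S T))"

definition Proj :: "nat \<Rightarrow> qop" where
  "Proj m = (\<lambda>S T. if S = T \<and> card S = m then 1 else 0)"

definition Bop :: "nat \<Rightarrow> nat \<Rightarrow> qop" where
  "Bop n k = (\<lambda>S T. \<Sum>m=0..k. (-1)^m * of_nat ((n - m) choose (k - m)) * Proj m S T)"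

text \<open>A acts non-trivially on at most k qubits: A = B_Q \<otimes> I on a set Q of at most k qubits.\<close>
definition klocal :: "nat \<Rightarrow> nat \<Rightarrow> qop \<Rightarrow> bool" where
  "klocal n k A \<longleftrightarrow> (\<exists>Q B. Q \<subseteq> {..<n} \<and> card Q \<le> k \<and>
     (\<forall>S\<in>basis n. \<forall>T\<in>basis n.
        A S T = (if S - Q = T - Q then B (S \<inter> Q) (T \<inter> Q) else 0)))"

definition sum_of_klocal :: "nat \<Rightarrow> nat \<Rightarrow> qop \<Rightarrow> bool" where
  "sum_of_klocal n k H \<longleftrightarrow> (\<exists>(m::nat) Ms. (\<forall>i<m. klocal n k (Ms i)) \<and>
     (\<forall>S\<in>basis n. \<forall>T\<in>basis n. H S T = (\<Sum>i<m. Ms i S T)))"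

end

theory Submission imports Defs begin

lemma sgnprod:
  assumes "finite I"
  shows "(\<Prod>j\<in>I. if j \<in> S then -1 else (1::complex)) = (-1) ^ card (I \<inter> S)"
proof -
  have "(\<Prod>j\<in>I. if j \<in> S then -1 else (1::complex)) = (\<Prod>j\<in>I \<inter> {j. j\<in>S}. -1) * (\<Prod>j\<in>I \<inter> - {j. j\<in>S}. 1)"
    by (rule prod.If_cases[OF assms])
  also have "\<dots> = (-1) ^ card (I \<inter> S)" by (simp add: Collect_mem_eq)
  finally show ?thesis .
qed

lemma diag_trace:
  assumes "\<forall>S T. S \<noteq> T \<longrightarrow> D S T = 0"
  shows "qtrace n (mmult n H D) = (\<Sum>S\<in>basis n. H S S * D S S)"
proof -
  have fin: "finite (basis n)" by (simp add: basis_def)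
  have "mmult n H D S S = H S S * D S S" if "S \<in> basis n" for S
  proof -
    have "mmult n H D S S = (\<Sum>U\<in>basis n. if U = S then H S S * D S S else 0)"
      unfolding mmult_def by (rule sum.cong) (use assms in auto)
    also have "\<dots> = H S S * D S S" using fin that by simp
    finally show ?thesis .
  qed
  then show ?thesis by (simp add: qtrace_def)
qed

lemma count_sup:
  assumes "S \<subseteq> {..<n}"
  shows "card {J. J \<subseteq> {..<n} \<and> card J = r \<and> S \<subseteq> J} =
    (if card S \<le> r then (n - card S) choose (r - card S) else 0)"
proof (cases "card S \<le> r")
  case False
  have "{J. J \<subseteq> {..<n} \<and> card J = r \<and> S \<subseteq> J} = {}"
  proof (rule ccontr)
    assume "{J. J \<subseteq> {..<n} \<and> card J = r \<and> S \<subseteq> J} \<noteq> {}"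
    then obtain J where J: "J \<subseteq> {..<n}" "card J = r" "S \<subseteq> J" by blast
    then have "finite J" using finite_subset by blast
    then have "card S \<le> card J" using card_mono J by blast
    with J False show False by simp
  qed
  then show ?thesis using False by simp
next
  case True
  have finS: "finite S" using assms finite_subset by blast
  have "bij_betw (\<lambda>J. J - S) {J. J \<subseteq> {..<n} \<and> card J = r \<and> S \<subseteq> J}
          {K. K \<subseteq> {..<n} - S \<and> card K = r - card S}"
  proof (rule bij_betw_byWitness[where f'="\<lambda>K. K \<union> S"])
    show "\<forall>a\<in>{J. J \<subseteq> {..<n} \<and> card J = r \<and> S \<subseteq> J}. a - S \<union> S = a" by auto
    show "\<forall>a'\<in>{K. K \<subseteq> {..<n} - S \<and> card K = r - card S}. a' \<union> S - S = a'" by auto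
    show "(\<lambda>J. J - S) ` {J. J \<subseteq> {..<n} \<and> card J = r \<and> S \<subseteq> J} \<subseteq> {K. K \<subseteq> {..<n} - S \<and> card K = r - card S}"
    proof
      fix x assume "x \<in> (\<lambda>J. J - S) ` {J. J \<subseteq> {..<n} \<and> card J = r \<and> S \<subseteq> J}"
      then obtain J where J: "J \<subseteq> {..<n}" "S \<subseteq> J" "card J = r" and x: "x = J - S" by auto
      then have "finite J" using finite_subset by blast
      then show "x \<in> {K. K \<subseteq> {..<n} - S \<and> card K = r - card S}"
        using J x card_Diff_subset[OF finS J(2)] by auto
    qed
    show "(\<lambda>K. K \<union> S) ` {K. K \<subseteq> {..<n} - S \<and> card K = r - card S} \<subseteq> {J. J \<subseteq> {..<n} \<and> card J = r \<and> S \<subseteq> J}"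
    proof
      fix x assume "x \<in> (\<lambda>K. K \<union> S) ` {K. K \<subseteq> {..<n} - S \<and> card K = r - card S}"
      then obtain K where K: "K \<subseteq> {..<n} - S" "card K = r - card S" and x: "x = K \<union> S" by auto
      then have "finite K" using finite_subset by blast
      moreover have "K \<inter> S = {}" using K by auto
      ultimately have "card (K \<union> S) = card K + card S" using card_Un_disjoint finS by blast
      then show "x \<in> {J. J \<subseteq> {..<n} \<and> card J = r \<and> S \<subseteq> J}" using K x True assms by auto
    qed
  qed
  then have "card {J. J \<subseteq> {..<n} \<and> card J = r \<and> S \<subseteq> J} = card {K. K \<subseteq> {..<n} - S \<and> card K = r - card S}"
    by (rule bij_betw_same_card)
  also have "\<dots> = card ({..<n} - S) choose (r - card S)" by (rule n_subsets) simp
  also have "card ({..<n} - S) = n - card S" using card_Diff_subset[OF finS assms] by simp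
  finally show ?thesis using True by simp
qed

lemma Bdiag:
  assumes "S \<subseteq> {..<n}"
  shows "Bop n r S S = (\<Sum>J\<in>{J. J \<subseteq> {..<n} \<and> card J = r}. if S \<subseteq> J then (-1) ^ card S else 0)"
proof -
  have "Bop n r S S = (\<Sum>m=0..r. if m = card S then (-1)^card S * of_nat ((n - card S) choose (r - card S)) else 0)"
    unfolding Bop_def Proj_def by (rule sum.cong) auto
  also have "\<dots> = (if card S \<le> r then (-1)^card S * of_nat ((n - card S) choose (r - card S)) else 0)"
    by (simp add: sum.delta)
  also have "\<dots> = (-1) ^ card S * of_nat (card {J. J \<subseteq> {..<n} \<and> card J = r \<and> S \<subseteq> J})"
    using count_sup[OF assms, of r] by simp
  also have "\<dots> = (\<Sum>J\<in>{J. J \<subseteq> {..<n} \<and> card J = r \<and> S \<subseteq> J}. (-1) ^ card S)" by simp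
  also have "\<dots> = (\<Sum>J\<in>{J. J \<subseteq> {..<n} \<and> card J = r}. if S \<subseteq> J then (-1) ^ card S else 0)"
  proof -
    have fin: "finite {J. J \<subseteq> {..<n} \<and> card J = r}" by (rule finite_subset[of _ "Pow {..<n}"]) auto
    have eq: "{J. J \<subseteq> {..<n} \<and> card J = r \<and> S \<subseteq> J} = {J\<in>{J. J \<subseteq> {..<n} \<and> card J = r}. S \<subseteq> J}" by blast
    show ?thesis by (subst eq, rule sum.inter_filter[OF fin])
  qed
  finally show ?thesis .
qed

lemma Cdiag:
  "Cop n k S S = (\<Sum>I\<in>{I. I \<subseteq> {..<n} \<and> card I = k}. (-1) ^ card (I \<inter> S))"
proof (cases "k = 0")
  case True
  have "{I. I \<subseteq> {..<n} \<and> card I = 0} = {{}}" by (auto simp: card_eq_0_iff dest: finite_subset[OF _ finite_lessThan])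
  then show ?thesis using True by (simp add: Cop_def idop_def)
next
  case False
  have "Cop n k S S = (\<Sum>I\<in>{I. I \<subseteq> {..<n} \<and> card I = k}. Zprod I S S)"
    using False by (simp add: Cop_def)
  also have "\<dots> = (\<Sum>I\<in>{I. I \<subseteq> {..<n} \<and> card I = k}. (-1) ^ card (I \<inter> S))"
  proof (rule sum.cong)
    fix I assume "I \<in> {I. I \<subseteq> {..<n} \<and> card I = k}"
    then have "finite I" using finite_subset by blast
    then show "Zprod I S S = (-1) ^ card (I \<inter> S)" by (simp add: Zprod_def sgnprod)
  qed simp
  finally show ?thesis .
qed


lemma prod_sum_pow1:
  assumes "finite X"
  shows "(\<Sum>T\<in>Pow X. prod f T) = (\<Prod>j\<in>X. f j + (1::complex))"
  using prod_add[OF assms, of f "\<lambda>_. 1"] by simp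

lemma pin_Q:
  assumes "Q \<subseteq> {..<n::nat}" "J \<subseteq> {..<n}" "({..<n} - Q) \<inter> J = {}" "card Q \<le> card J"
  shows "J = Q"
proof -
  have "J \<subseteq> Q" using assms by blast
  moreover have "finite Q" by (rule finite_subset[OF assms(1)]) simp
  ultimately show ?thesis using card_seteq assms(4) by blast
qed

lemma Bsep:
  assumes "finite X" "finite R" "R \<inter> X = {}"
  shows "(\<Sum>T\<in>Pow X. if R \<union> T \<subseteq> J then (-1::complex) ^ card (R \<union> T) else 0)
       = (if R \<subseteq> J then (-1) ^ card R else 0) * (if X \<inter> J = {} then 1 else 0)"
proof -
  define f where "f = (\<lambda>j. if j \<in> J then -1 else (0::complex))"
  have pf: "prod f T = (if T \<subseteq> J then (-1) ^ card T else 0)" if "T \<subseteq> X" for T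
  proof (cases "T \<subseteq> J")
    case True
    then have "prod f T = prod (\<lambda>_. -1) T" unfolding f_def by (intro prod.cong) auto
    then show ?thesis using True by simp
  next
    case False
    then obtain j where "j \<in> T" "j \<notin> J" by blast
    moreover have "finite T" using finite_subset[OF that assms(1)] .
    ultimately have "prod f T = 0" unfolding f_def by (intro prod_zero) auto
    then show ?thesis using False by simp
  qed
  have "(\<Sum>T\<in>Pow X. if R \<union> T \<subseteq> J then (-1::complex) ^ card (R \<union> T) else 0)
     = (\<Sum>T\<in>Pow X. (if R \<subseteq> J then (-1) ^ card R else 0) * prod f T)"
  proof (rule sum.cong)
    fix T assume T: "T \<in> Pow X"
    then have "finite T" using finite_subset[of T X] T assms(1) by simp
    moreover have "R \<inter> T = {}" using T assms(3) by blast
    ultimately have "card (R \<union> T) = card R + card T" using card_Un_disjoint assms(2) by blast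
    then show "(if R \<union> T \<subseteq> J then (-1::complex) ^ card (R \<union> T) else 0) = (if R \<subseteq> J then (-1) ^ card R else 0) * prod f T"
      using pf[of T] T by (auto simp: power_add)
  qed simp
  also have "\<dots> = (if R \<subseteq> J then (-1) ^ card R else 0) * (\<Prod>j\<in>X. f j + 1)"
    by (simp add: sum_distrib_left[symmetric] prod_sum_pow1[OF assms(1)])
  also have "(\<Prod>j\<in>X. f j + 1) = (if X \<inter> J = {} then 1 else 0)"
  proof (cases "X \<inter> J = {}")
    case True
    then have "(\<Prod>j\<in>X. f j + 1) = (\<Prod>j\<in>X. 1)" unfolding f_def by (intro prod.cong) auto
    then show ?thesis using True by simp
  next
    case False
    then obtain j where "j \<in> X" "j \<in> J" by blast
    then have "(\<Prod>j\<in>X. f j + 1) = 0" unfolding f_def using assms(1) by (intro prod_zero) auto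
    then show ?thesis using False by simp
  qed
  finally show ?thesis .
qed

lemma Bsum:
  assumes Q: "Q \<subseteq> {..<n}" and R: "R \<subseteq> Q" and c: "card Q \<le> r"
  shows "(\<Sum>T\<in>Pow ({..<n} - Q). Bop n r (R \<union> T) (R \<union> T)) = (if r = card Q then (-1) ^ card R else 0)"
proof -
  let ?X = "{..<n} - Q" and ?J = "{J. J \<subseteq> {..<n} \<and> card J = r}"
  have finJ: "finite ?J" by (rule finite_subset[of _ "Pow {..<n}"]) auto
  have finR: "finite R" by (rule finite_subset[OF subset_trans[OF R Q]]) simp
  have "(\<Sum>T\<in>Pow ?X. Bop n r (R \<union> T) (R \<union> T))
      = (\<Sum>T\<in>Pow ?X. \<Sum>J\<in>?J. if R \<union> T \<subseteq> J then (-1) ^ card (R \<union> T) else 0)"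
  proof (rule sum.cong)
    fix T assume "T \<in> Pow ?X"
    then have "R \<union> T \<subseteq> {..<n}" using Q R by blast
    then show "Bop n r (R \<union> T) (R \<union> T) = (\<Sum>J\<in>?J. if R \<union> T \<subseteq> J then (-1) ^ card (R \<union> T) else 0)"
      by (rule Bdiag)
  qed simp
  also have "\<dots> = (\<Sum>J\<in>?J. \<Sum>T\<in>Pow ?X. if R \<union> T \<subseteq> J then (-1) ^ card (R \<union> T) else 0)"
    by (rule sum.swap)
  also have "\<dots> = (\<Sum>J\<in>?J. (if R \<subseteq> J then (-1) ^ card R else 0) * (if ?X \<inter> J = {} then 1 else 0))"
  proof (rule sum.cong)
    fix J assume "J \<in> ?J"
    have "R \<inter> ?X = {}" using R by blast
    then show "(\<Sum>T\<in>Pow ?X. if R \<union> T \<subseteq> J then (-1::complex) ^ card (R \<union> T) else 0) = (if R \<subseteq> J then (-1) ^ card R else 0) * (if ?X \<inter> J = {} then 1 else 0)"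
      using finR by (intro Bsep) auto
  qed simp
  also have "\<dots> = (\<Sum>J\<in>?J. if J = Q \<and> r = card Q then (-1) ^ card R else 0)"
  proof (rule sum.cong)
    fix J assume J: "J \<in> ?J"
    show "(if R \<subseteq> J then (-1::complex) ^ card R else 0) * (if ?X \<inter> J = {} then 1 else 0) = (if J = Q \<and> r = card Q then (-1) ^ card R else 0)"
    proof (cases "?X \<inter> J = {}")
      case True
      then have "J = Q" using pin_Q[OF Q, of J] J c by auto
      then show ?thesis using True J R by auto
    next
      case False
      then show ?thesis using Q by auto
    qed
  qed simp
  also have "\<dots> = (if r = card Q then (-1) ^ card R else 0)"
  proof (cases "r = card Q")
    case True
    have "Q \<in> ?J" using Q True by auto
    then show ?thesis using True finJ by (simp add: sum.delta')
  qed simp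
  finally show ?thesis .
qed

lemma Csep:
  assumes "finite X" "finite I" "R \<inter> X = {}"
  shows "(\<Sum>T\<in>Pow X. (-1::complex) ^ card (I \<inter> (R \<union> T)))
       = (-1) ^ card (I \<inter> R) * (if X \<inter> I = {} then 2 ^ card X else 0)"
proof -
  define g where "g = (\<lambda>j. if j \<in> I then -1 else (1::complex))"
  have "(\<Sum>T\<in>Pow X. (-1::complex) ^ card (I \<inter> (R \<union> T))) = (\<Sum>T\<in>Pow X. (-1) ^ card (I \<inter> R) * prod g T)"
  proof (rule sum.cong)
    fix T assume T: "T \<in> Pow X"
    then have fT: "finite T" using finite_subset[of T X] T assms(1) by simp
    have "I \<inter> (R \<union> T) = (I \<inter> R) \<union> (I \<inter> T)" by blast
    moreover have "(I \<inter> R) \<inter> (I \<inter> T) = {}" using T assms(3) by blast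
    ultimately have "card (I \<inter> (R \<union> T)) = card (I \<inter> R) + card (I \<inter> T)"
      using card_Un_disjoint assms(2) by (metis finite_Int)
    moreover have "prod g T = (-1) ^ card (T \<inter> I)" unfolding g_def by (rule sgnprod[OF fT])
    ultimately show "(-1::complex) ^ card (I \<inter> (R \<union> T)) = (-1) ^ card (I \<inter> R) * prod g T"
      by (simp add: power_add Int_commute)
  qed simp
  also have "\<dots> = (-1) ^ card (I \<inter> R) * (\<Prod>j\<in>X. g j + 1)"
    by (simp add: sum_distrib_left[symmetric] prod_sum_pow1[OF assms(1)])
  also have "(\<Prod>j\<in>X. g j + 1) = (if X \<inter> I = {} then 2 ^ card X else 0)"
  proof (cases "X \<inter> I = {}")
    case True
    then have "(\<Prod>j\<in>X. g j + 1) = (\<Prod>j\<in>X. 2)" unfolding g_def by (intro prod.cong) auto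
    then show ?thesis using True by simp
  next
    case False
    then obtain j where "j \<in> X" "j \<in> I" by blast
    then have "(\<Prod>j\<in>X. g j + 1) = 0" unfolding g_def using assms(1) by (intro prod_zero) auto
    then show ?thesis using False by simp
  qed
  finally show ?thesis .
qed

lemma Csum:
  assumes Q: "Q \<subseteq> {..<n}" and R: "R \<subseteq> Q" and c: "card Q \<le> k"
  shows "(\<Sum>T\<in>Pow ({..<n} - Q). Cop n k (R \<union> T) (R \<union> T)) = (if k = card Q then (-1) ^ card R * 2 ^ (n - k) else 0)"
proof -
  let ?X = "{..<n} - Q" and ?J = "{J. J \<subseteq> {..<n} \<and> card J = k}"
  have finJ: "finite ?J" by (rule finite_subset[of _ "Pow {..<n}"]) auto
  have cX: "card ?X = n - card Q" using card_Diff_subset[OF finite_subset[OF Q] Q] by simp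
  have "(\<Sum>T\<in>Pow ?X. Cop n k (R \<union> T) (R \<union> T))
      = (\<Sum>T\<in>Pow ?X. \<Sum>J\<in>?J. (-1) ^ card (J \<inter> (R \<union> T)))"
    by (rule sum.cong) (rule refl, rule Cdiag)
  also have "\<dots> = (\<Sum>J\<in>?J. \<Sum>T\<in>Pow ?X. (-1) ^ card (J \<inter> (R \<union> T)))"
    by (rule sum.swap)
  also have "\<dots> = (\<Sum>J\<in>?J. (-1) ^ card (J \<inter> R) * (if ?X \<inter> J = {} then 2 ^ card ?X else 0))"
  proof (rule sum.cong)
    fix J assume "J \<in> ?J"
    then have "finite J" using finite_subset[of J "{..<n}"] by simp
    then show "(\<Sum>T\<in>Pow ?X. (-1::complex) ^ card (J \<inter> (R \<union> T))) = (-1) ^ card (J \<inter> R) * (if ?X \<inter> J = {} then 2 ^ card ?X else 0)"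
      using R by (intro Csep) auto
  qed simp
  also have "\<dots> = (\<Sum>J\<in>?J. if J = Q \<and> k = card Q then (-1) ^ card R * 2 ^ (n - k) else 0)"
  proof (rule sum.cong)
    fix J assume J: "J \<in> ?J"
    show "(-1::complex) ^ card (J \<inter> R) * (if ?X \<inter> J = {} then 2 ^ card ?X else 0) = (if J = Q \<and> k = card Q then (-1) ^ card R * 2 ^ (n - k) else 0)"
    proof (cases "?X \<inter> J = {}")
      case True
      then have "J = Q" using pin_Q[OF Q, of J] J c by auto
      moreover have "J \<inter> R = R" using R \<open>J = Q\<close> by blast
      ultimately show ?thesis using True J cX by auto
    next
      case False
      then show ?thesis using Q by auto
    qed
  qed simp
  also have "\<dots> = (if k = card Q then (-1) ^ card R * 2 ^ (n - k) else 0)"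
  proof (cases "k = card Q")
    case True
    have "Q \<in> ?J" using Q True by auto
    then show ?thesis using True finJ by (simp add: sum.delta')
  qed simp
  finally show ?thesis .
qed


lemma regroup:
  assumes Q: "Q \<subseteq> {..<n}" and A: "\<forall>S\<in>basis n. A S S = B (S \<inter> Q) (S \<inter> Q)"
  shows "(\<Sum>S\<in>basis n. A S S * (d S :: complex)) = (\<Sum>R\<in>Pow Q. B R R * (\<Sum>T\<in>Pow ({..<n} - Q). d (R \<union> T)))"
proof -
  let ?X = "{..<n} - Q"
  have bij: "bij_betw (\<lambda>(R, T). R \<union> T) (Pow Q \<times> Pow ?X) (Pow {..<n})"
  proof (rule bij_betw_byWitness[where f'="\<lambda>S. (S \<inter> Q, S - Q)"])
    show "\<forall>a\<in>Pow Q \<times> Pow ?X. ((case a of (R, T) \<Rightarrow> R \<union> T) \<inter> Q, (case a of (R, T) \<Rightarrow> R \<union> T) - Q) = a" by auto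
    show "\<forall>a'\<in>Pow {..<n}. (case (a' \<inter> Q, a' - Q) of (R, T) \<Rightarrow> R \<union> T) = a'" by auto
    show "(\<lambda>(R, T). R \<union> T) ` (Pow Q \<times> Pow ?X) \<subseteq> Pow {..<n}" using Q by auto
    show "(\<lambda>S. (S \<inter> Q, S - Q)) ` Pow {..<n} \<subseteq> Pow Q \<times> Pow ?X" by auto
  qed
  have "(\<Sum>S\<in>basis n. A S S * d S) = (\<Sum>p\<in>Pow Q \<times> Pow ?X. (\<lambda>S. A S S * d S) (case p of (R, T) \<Rightarrow> R \<union> T))"
    unfolding basis_def by (rule sum.reindex_bij_betw[OF bij, symmetric])
  also have "\<dots> = (\<Sum>p\<in>Pow Q \<times> Pow ?X. B (fst p) (fst p) * d (fst p \<union> snd p))"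
  proof (rule sum.cong)
    fix p assume p: "p \<in> Pow Q \<times> Pow ?X"
    then obtain R T where pRT: "p = (R, T)" "R \<subseteq> Q" "T \<subseteq> ?X" by auto
    then have "R \<union> T \<in> basis n" using Q by (auto simp: basis_def)
    moreover have "(R \<union> T) \<inter> Q = R" using pRT by auto
    ultimately show "(\<lambda>S. A S S * d S) (case p of (R, T) \<Rightarrow> R \<union> T) = B (fst p) (fst p) * d (fst p \<union> snd p)"
      using A pRT by auto
  qed simp
  also have "\<dots> = (\<Sum>R\<in>Pow Q. \<Sum>T\<in>Pow ?X. B R R * d (R \<union> T))"
    by (subst sum.cartesian_product) (simp add: case_prod_beta)
  also have "\<dots> = (\<Sum>R\<in>Pow Q. B R R * (\<Sum>T\<in>Pow ?X. d (R \<union> T)))"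
    by (simp add: sum_distrib_left)
  finally show ?thesis .
qed


lemma termB:
  assumes Q: "Q \<subseteq> {..<n}" and c: "card Q \<le> r" and A: "\<forall>S\<in>basis n. A S S = B (S \<inter> Q) (S \<inter> Q)"
  shows "(\<Sum>S\<in>basis n. A S S * Bop n r S S) = (if r = card Q then (\<Sum>R\<in>Pow Q. B R R * (-1) ^ card R) else 0)"
proof -
  have "(\<Sum>S\<in>basis n. A S S * Bop n r S S) = (\<Sum>R\<in>Pow Q. B R R * (\<Sum>T\<in>Pow ({..<n} - Q). Bop n r (R \<union> T) (R \<union> T)))"
    by (rule regroup[where A=A and B=B and d="\<lambda>S. Bop n r S S", OF Q A])
  also have "\<dots> = (\<Sum>R\<in>Pow Q. B R R * (if r = card Q then (-1) ^ card R else 0))" (is "_ = (\<Sum>R\<in>Pow Q. B R R * ?v R)")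
  proof (rule sum.cong[OF refl])
    fix R assume "R \<in> Pow Q"
    then have R: "R \<subseteq> Q" by simp
    show "B R R * (\<Sum>T\<in>Pow ({..<n} - Q). Bop n r (R \<union> T) (R \<union> T)) = B R R * ?v R"
      using Bsum[OF Q R c] by simp
  qed
  also have "\<dots> = (if r = card Q then (\<Sum>R\<in>Pow Q. B R R * (-1) ^ card R) else 0)"
    by (cases "r = card Q") simp_all
  finally show ?thesis .
qed

lemma termC:
  assumes Q: "Q \<subseteq> {..<n}" and c: "card Q \<le> k" and A: "\<forall>S\<in>basis n. A S S = B (S \<inter> Q) (S \<inter> Q)"
  shows "(\<Sum>S\<in>basis n. A S S * Cop n k S S) = (if k = card Q then 2 ^ (n - k) * (\<Sum>R\<in>Pow Q. B R R * (-1) ^ card R) else 0)"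
proof -
  have "(\<Sum>S\<in>basis n. A S S * Cop n k S S) = (\<Sum>R\<in>Pow Q. B R R * (\<Sum>T\<in>Pow ({..<n} - Q). Cop n k (R \<union> T) (R \<union> T)))"
    by (rule regroup[where A=A and B=B and d="\<lambda>S. Cop n k S S", OF Q A])
  also have "\<dots> = (\<Sum>R\<in>Pow Q. B R R * (if k = card Q then (-1) ^ card R * 2 ^ (n - k) else 0))" (is "_ = (\<Sum>R\<in>Pow Q. B R R * ?v R)")
  proof (rule sum.cong[OF refl])
    fix R assume "R \<in> Pow Q"
    then have R: "R \<subseteq> Q" by simp
    show "B R R * (\<Sum>T\<in>Pow ({..<n} - Q). Cop n k (R \<union> T) (R \<union> T)) = B R R * ?v R"
      using Csum[OF Q R c] by simp
  qed
  also have "\<dots> = (if k = card Q then 2 ^ (n - k) * (\<Sum>R\<in>Pow Q. B R R * (-1) ^ card R) else 0)"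
    by (cases "k = card Q") (simp_all add: sum_distrib_left mult_ac)
  finally show ?thesis .
qed

lemma Bop_diag: "S \<noteq> T \<Longrightarrow> Bop n r S T = 0"
  by (simp add: Bop_def Proj_def)

lemma Cop_diag: "S \<noteq> T \<Longrightarrow> Cop n k S T = 0"
  by (simp add: Cop_def idop_def Zprod_def)

lemma local_eq:
  assumes "klocal n k A"
  obtains Q B where "Q \<subseteq> {..<n}" "card Q \<le> k" "\<forall>S\<in>basis n. A S S = B (S \<inter> Q) (S \<inter> Q)"
proof -
  from assms[unfolded klocal_def] obtain Q B where h: "Q \<subseteq> {..<n} \<and> card Q \<le> k \<and>
    (\<forall>S\<in>basis n. \<forall>T\<in>basis n. A S T = (if S - Q = T - Q then B (S \<inter> Q) (T \<inter> Q) else 0))"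
    by (elim exE)
  have "\<forall>S\<in>basis n. A S S = B (S \<inter> Q) (S \<inter> Q)"
  proof
    fix S assume "S \<in> basis n"
    then have "A S S = (if S - Q = S - Q then B (S \<inter> Q) (S \<inter> Q) else 0)" using h by blast
    then show "A S S = B (S \<inter> Q) (S \<inter> Q)" by simp
  qed
  moreover have "Q \<subseteq> {..<n}" "card Q \<le> k" using h by simp_all
  ultimately show ?thesis using that by blast
qed

lemma pow2_cancel:
  assumes "k \<le> n"
  shows "(2::complex) powi (int k - int n) * 2 ^ (n - k) = 1"
proof -
  have e: "int k - int n = - int (n - k)" using assms by simp
  have "(2::complex) powi (int k - int n) = inverse (2 ^ (n - k))"
    unfolding e power_int_minus power_int_of_nat ..
  then show ?thesis by simp
qed

theorem lemma2:
  fixes n k :: nat and H :: qop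
  assumes "n \<ge> 1" and "k \<le> n" and "sum_of_klocal n k H"
  shows "qtrace n (mmult n H (Bop n k)) = (2::complex) powi (int k - int n) * qtrace n (mmult n H (Cop n k))
       \<and> (\<forall>r. k < r \<and> r \<le> n \<longrightarrow> qtrace n (mmult n H (Bop n r)) = 0)"
proof -
  obtain m and Ms :: "nat \<Rightarrow> qop" where Ms: "\<forall>i<m. klocal n k (Ms i)" and
    Hd: "\<forall>S\<in>basis n. \<forall>T\<in>basis n. H S T = (\<Sum>i<m. Ms i S T)"
    using assms(3) unfolding sum_of_klocal_def by blast
  have tr: "qtrace n (mmult n H D) = (\<Sum>i<m. \<Sum>S\<in>basis n. Ms i S S * D S S)"
    if D: "\<forall>S T. S \<noteq> T \<longrightarrow> D S T = 0" for D
  proof -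
    have "qtrace n (mmult n H D) = (\<Sum>S\<in>basis n. H S S * D S S)" by (rule diag_trace[OF D])
    also have "\<dots> = (\<Sum>S\<in>basis n. \<Sum>i<m. Ms i S S * D S S)"
      by (rule sum.cong[OF refl]) (simp add: Hd sum_distrib_right)
    also have "\<dots> = (\<Sum>i<m. \<Sum>S\<in>basis n. Ms i S S * D S S)" by (rule sum.swap)
    finally show ?thesis .
  qed
  have trB: "qtrace n (mmult n H (Bop n r)) = (\<Sum>i<m. \<Sum>S\<in>basis n. Ms i S S * Bop n r S S)" for r
    by (rule tr) (simp add: Bop_diag)
  have trC: "qtrace n (mmult n H (Cop n k)) = (\<Sum>i<m. \<Sum>S\<in>basis n. Ms i S S * Cop n k S S)"
    by (rule tr) (simp add: Cop_diag)
  have part1: "(\<Sum>S\<in>basis n. Ms i S S * Bop n k S S) = (2::complex) powi (int k - int n) * (\<Sum>S\<in>basis n. Ms i S S * Cop n k S S)"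
    if im: "i < m" for i
  proof -
    obtain Q B where Q: "Q \<subseteq> {..<n}" "card Q \<le> k" and A: "\<forall>S\<in>basis n. Ms i S S = B (S \<inter> Q) (S \<inter> Q)"
      by (rule local_eq[OF Ms[rule_format, OF im]])
    let ?s = "\<Sum>R\<in>Pow Q. B R R * (-1) ^ card R"
    show ?thesis
    proof (cases "k = card Q")
      case True
      have eB: "(\<Sum>S\<in>basis n. Ms i S S * Bop n k S S) = ?s"
        using termB[where A="Ms i" and B=B, OF Q A] True by simp
      have eC: "(\<Sum>S\<in>basis n. Ms i S S * Cop n k S S) = 2 ^ (n - k) * ?s"
        using termC[where A="Ms i" and B=B, OF Q A] True by simp
      show ?thesis unfolding eB eC mult.assoc[symmetric] pow2_cancel[OF assms(2)] by simp
    next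
      case False
      then show ?thesis
        using termB[where A="Ms i" and B=B, OF Q A] termC[where A="Ms i" and B=B, OF Q A] by simp
    qed
  qed
  have part2: "(\<Sum>S\<in>basis n. Ms i S S * Bop n r S S) = 0"
    if "i < m" "k < r" for i r
  proof -
    obtain Q B where Q: "Q \<subseteq> {..<n}" "card Q \<le> k" and A: "\<forall>S\<in>basis n. Ms i S S = B (S \<inter> Q) (S \<inter> Q)"
      by (rule local_eq[OF Ms[rule_format, OF \<open>i < m\<close>]])
    have c: "card Q \<le> r" using Q that by simp
    show ?thesis using termB[where A="Ms i" and B=B, OF Q(1) c A] Q that by simp
  qed
  show ?thesis
  proof
    show "qtrace n (mmult n H (Bop n k)) = (2::complex) powi (int k - int n) * qtrace n (mmult n H (Cop n k))"
    proof -
      have "(\<Sum>i<m. \<Sum>S\<in>basis n. Ms i S S * Bop n k S S) = (\<Sum>i<m. (2::complex) powi (int k - int n) * (\<Sum>S\<in>basis n. Ms i S S * Cop n k S S))"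
        by (rule sum.cong) (simp_all add: part1)
      also have "\<dots> = (2::complex) powi (int k - int n) * (\<Sum>i<m. \<Sum>S\<in>basis n. Ms i S S * Cop n k S S)"
        by (rule sum_distrib_left[symmetric])
      finally show ?thesis unfolding trB trC .
    qed
    show "\<forall>r. k < r \<and> r \<le> n \<longrightarrow> qtrace n (mmult n H (Bop n r)) = 0"
    proof (intro allI impI)
      fix r assume r: "k < r \<and> r \<le> n"
      have "(\<Sum>i<m. \<Sum>S\<in>basis n. Ms i S S * Bop n r S S) = (\<Sum>i<m. (0::complex))"
        by (rule sum.cong) (use r part2 in auto)
      then show "qtrace n (mmult n H (Bop n r)) = 0" unfolding trB by simp
    qed
  qed
qed

end
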